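(* Let $(\mathcal{X},d)$ be a Polish metric space and let $(X_N)_{N\in\mathbb{N}}$ be a Markov chain on $\mathcal{X}$ with transition kernel $(P_x)_{x\in\mathcal{X}}$, where $x\mapsto P_x$ is measurable and each $P_x$ has finite first moment. Assume there exists $\kappa>0$ such that $W_1(P_x,P_y)\le(1-\kappa)\,d(x,y)$ for all $x,y\in\mathcal{X}$, and let $\pi$ be the (unique) invariant probability measure of the chain. Let $T\ge1$ and $T_0\ge0$ be integers and set $\hat\pi(f):=\frac1T\sum_{k=T_0+1}^{T_0+T}f(X_k)$. Then for every Lipschitz function $f:\mathcal{X}\to\mathbb{R}$ and every $x\in\mathcal{X}$, \[ |\mathbb{E}_x\hat\pi(f)-\pi(f)|\le\frac{(1-\kappa)^{T_0+1}}{\kappa T}\,E(x)\,\|f\|_{\mathrm{Lip}}. \]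
   Context: $W_1(\mu_1,\mu_2)=\inf_{\xi}\int\!\!\int d(x,y)\,\xi(dx,dy)$, the infimum over couplings $\xi$ of $\mu_1,\mu_2$, is the $L^1$ Wasserstein distance. $\mathbb{E}_x$ denotes expectation for the chain started at $X_0=x$. The eccentricity is $E(x):=\int_{\mathcal{X}}d(x,y)\,\pi(dy)$. $\|f\|_{\mathrm{Lip}}:=\sup_{x\ne y}|f(x)-f(y)|/d(x,y)$, and $\pi(f)=\int f\,d\pi$. *)

theory Defs
  imports "HOL-Probability.Probability"
begin

definition coupling :: "('a::metric_space \<times> 'a) measure \<Rightarrow> 'a measure \<Rightarrow> 'a measure \<Rightarrow> bool" where
  "coupling \<xi> \<mu> \<nu> \<longleftrightarrow> prob_space \<xi> \<and> sets \<xi> = sets (borel \<Otimes>\<^sub>M borel) \<and>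
     distr \<xi> borel fst = \<mu> \<and> distr \<xi> borel snd = \<nu>"

text \<open>L^1 Wasserstein distance: infimum of the transport cost over couplings
  (couplings with non-integrable cost have cost +infinity and do not contribute).\<close>
definition W1 :: "'a::metric_space measure \<Rightarrow> 'a measure \<Rightarrow> real" where
  "W1 \<mu> \<nu> = Inf {(\<integral>p. dist (fst p) (snd p) \<partial>\<xi>) | \<xi>.
       coupling \<xi> \<mu> \<nu> \<and> integrable \<xi> (\<lambda>p. dist (fst p) (snd p))}"

text \<open>n-step transition kernel: law of X_n for the chain started at X_0 = x.\<close>
primrec kpow :: "('a::topological_space \<Rightarrow> 'a measure) \<Rightarrow> nat \<Rightarrow> 'a \<Rightarrow> 'a measure" where
  "kpow P 0 x = return borel x"
| "kpow P (Suc n) x = kpow P n x \<bind> P"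

definition eccentricity :: "'a::metric_space measure \<Rightarrow> 'a \<Rightarrow> real" where
  "eccentricity \<pi> x = (\<integral>y. dist x y \<partial>\<pi>)"

definition lip_norm :: "('a::metric_space \<Rightarrow> real) \<Rightarrow> real" where
  "lip_norm f = Sup {\<bar>f x - f y\<bar> / dist x y | x y. x \<noteq> y}"

end

theory Submission
  imports Defs
begin



locale chain =
  fixes P :: "'a::polish_space \<Rightarrow> 'a measure" and \<kappa> :: real
  assumes P_meas: "P \<in> borel \<rightarrow>\<^sub>M prob_algebra borel"
    and P_moment: "\<And>z. integrable (P z) (\<lambda>y. dist z y)"
    and contraction: "\<And>z y. W1 (P z) (P y) \<le> (1 - \<kappa>) * dist z y"
begin

lemma P_space: "P z \<in> space (prob_algebra borel)"
  by (rule measurable_space[OF P_meas]) simp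

lemma sets_P[simp, measurable_cong]: "sets (P z) = sets borel"
  using P_space unfolding space_prob_algebra by blast

lemma space_P[simp]: "space (P z) = UNIV"
  using sets_eq_imp_space_eq[OF sets_P] by (simp only: space_borel)

lemma prob_P: "prob_space (P z)"
  using P_space unfolding space_prob_algebra by blast
lemma integrable_P_dist: "integrable (P z) (\<lambda>y. dist w y)"
proof -
  interpret prob_space "P z" by (rule prob_P)
  have "integrable (P z) (\<lambda>y. dist w z + dist z y)"
    using P_moment by auto
  then show ?thesis
    by (rule Bochner_Integration.integrable_bound) (auto intro: dist_triangle)
qed

lemma distr_snd_pair:
  assumes "prob_space M" "prob_space N"
  shows "distr (M \<Otimes>\<^sub>M N) N snd = N"
proof (intro measure_eqI)
  fix A assume A: "A \<in> sets (distr (M \<Otimes>\<^sub>M N) N snd)"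
  from A have "emeasure (distr (M \<Otimes>\<^sub>M N) N snd) A = emeasure (M \<Otimes>\<^sub>M N) (space M \<times> A)"
    by (auto simp add: emeasure_distr space_pair_measure dest: sets.sets_into_space intro!: arg_cong2[where f=emeasure])
  with A assms show "emeasure (distr (M \<Otimes>\<^sub>M N) N snd) A = emeasure N A"
    by (simp add: sigma_finite_measure.emeasure_pair_measure_Times[OF prob_space_imp_sigma_finite[OF assms(2)]] prob_space.emeasure_space_1)
qed simp

lemma coupling_prod: "coupling (P z \<Otimes>\<^sub>M P y) (P z) (P y)"
proof -
  have 1: "distr (P z \<Otimes>\<^sub>M P y) borel fst = P z"
  proof -
    have "distr (P z \<Otimes>\<^sub>M P y) borel fst = distr (P z \<Otimes>\<^sub>M P y) (P z) fst"
      by (rule distr_cong) auto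
    also have "\<dots> = P z" using prob_P prob_space.distr_pair_fst by blast
    finally show ?thesis .
  qed
  have 2: "distr (P z \<Otimes>\<^sub>M P y) borel snd = P y"
  proof -
    have "distr (P z \<Otimes>\<^sub>M P y) borel snd = distr (P z \<Otimes>\<^sub>M P y) (P y) snd"
      by (rule distr_cong) auto
    also have "\<dots> = P y" using prob_P distr_snd_pair by blast
    finally show ?thesis .
  qed
  have s: "sets (P z \<Otimes>\<^sub>M P y) = sets (borel \<Otimes>\<^sub>M borel)"
    by (rule sets_pair_measure_cong[OF sets_P sets_P])
  show ?thesis unfolding coupling_def
    using 1 2 s prob_space_pair[OF prob_P prob_P] by blast
qed

lemma coupling_integrable_fst:
  assumes c: "coupling \<xi> \<mu> \<nu>" and g: "g \<in> borel_measurable borel" and i: "integrable \<mu> (g::_\<Rightarrow>real)"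
  shows "integrable \<xi> (\<lambda>p. g (fst p))" "(\<integral>p. g (fst p) \<partial>\<xi>) = (\<integral>y. g y \<partial>\<mu>)"
proof -
  have sx: "sets \<xi> = sets (borel \<Otimes>\<^sub>M borel)" and d: "distr \<xi> borel fst = \<mu>" using c by (auto simp: coupling_def)
  have m: "fst \<in> measurable \<xi> borel"
    using measurable_fst[of borel borel] measurable_cong_sets[OF sx refl] by blast
  have "integrable (distr \<xi> borel fst) g" unfolding d by (rule i)
  then show "integrable \<xi> (\<lambda>p. g (fst p))"
    using integrable_distr_eq[OF m g] by blast
  have "integral\<^sup>L (distr \<xi> borel fst) g = (\<integral>p. g (fst p) \<partial>\<xi>)" by (rule integral_distr[OF m g])
  then show "(\<integral>p. g (fst p) \<partial>\<xi>) = (\<integral>y. g y \<partial>\<mu>)" using d by metis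
qed

lemma coupling_integrable_snd:
  assumes c: "coupling \<xi> \<mu> \<nu>" and g: "g \<in> borel_measurable borel" and i: "integrable \<nu> (g::_\<Rightarrow>real)"
  shows "integrable \<xi> (\<lambda>p. g (snd p))" "(\<integral>p. g (snd p) \<partial>\<xi>) = (\<integral>y. g y \<partial>\<nu>)"
proof -
  have sx: "sets \<xi> = sets (borel \<Otimes>\<^sub>M borel)" and d: "distr \<xi> borel snd = \<nu>" using c by (auto simp: coupling_def)
  have m: "snd \<in> measurable \<xi> borel"
    using measurable_snd[of borel borel] measurable_cong_sets[OF sx refl] by blast
  have "integrable (distr \<xi> borel snd) g" unfolding d by (rule i)
  then show "integrable \<xi> (\<lambda>p. g (snd p))"
    using integrable_distr_eq[OF m g] by blast
  have "integral\<^sup>L (distr \<xi> borel snd) g = (\<integral>p. g (snd p) \<partial>\<xi>)" by (rule integral_distr[OF m g])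
  then show "(\<integral>p. g (snd p) \<partial>\<xi>) = (\<integral>y. g y \<partial>\<nu>)" using d by metis
qed

definition Wset where "Wset z y = {(\<integral>p. dist (fst p) (snd p) \<partial>\<xi>) | \<xi>.
       coupling \<xi> (P z) (P y) \<and> integrable \<xi> (\<lambda>p. dist (fst p) (snd p))}"

lemma W1_eq: "W1 (P z) (P y) = Inf (Wset z y)" unfolding W1_def Wset_def by (rule refl)

lemma Wset_nonempty: "Wset z y \<noteq> {}"
proof -
  let ?\<xi> = "P z \<Otimes>\<^sub>M P y"
  have c: "coupling ?\<xi> (P z) (P y)" by (rule coupling_prod)
  have m1: "(\<lambda>a. dist a z) \<in> borel_measurable borel"
    by (intro borel_measurable_continuous_onI continuous_intros)
  have m2: "(\<lambda>a. dist z a) \<in> borel_measurable borel"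
    by (intro borel_measurable_continuous_onI continuous_intros)
  have "(\<lambda>a. dist a z) = (\<lambda>a. dist z a)" by (rule ext, rule dist_commute)
  have "integrable (P z) (\<lambda>a. dist a z)"
    unfolding \<open>(\<lambda>a. dist a z) = (\<lambda>a. dist z a)\<close> by (rule integrable_P_dist)
  then have i1: "integrable ?\<xi> (\<lambda>p. dist (fst p) z)"
    by (rule coupling_integrable_fst(1)[OF c m1])
  have i2: "integrable ?\<xi> (\<lambda>p. dist z (snd p))"
    by (rule coupling_integrable_snd(1)[OF c m2 integrable_P_dist])
  have iS: "integrable ?\<xi> (\<lambda>p. dist (fst p) z + dist z (snd p))"
    using i1 i2 by (rule Bochner_Integration.integrable_add)
  have mD: "(\<lambda>p. dist (fst p) (snd p)) \<in> borel_measurable ?\<xi>"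
  proof -
    have "(\<lambda>p. dist (fst p) (snd p)) \<in> borel_measurable (borel \<Otimes>\<^sub>M borel :: ('a \<times> 'a) measure)"
      using borel_measurable_dist[OF measurable_fst measurable_snd] by simp
    then show ?thesis using measurable_cong_sets[OF sets_pair_measure_cong[OF sets_P sets_P] refl] by blast
  qed
  have nb: "\<And>p. norm (dist (fst p) (snd p)) \<le> norm (dist (fst p) z + dist z (snd p))"
    by (metis abs_of_nonneg dist_triangle zero_le_dist add_nonneg_nonneg real_norm_def)
  have "integrable ?\<xi> (\<lambda>p. dist (fst p) (snd p))"
    by (rule Bochner_Integration.integrable_bound[OF iS mD AE_I2[OF nb]])
  then have "(\<integral>p. dist (fst p) (snd p) \<partial>?\<xi>) \<in> Wset z y"
    unfolding Wset_def mem_Collect_eq by (intro exI[of _ ?\<xi>] conjI refl c)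
  then show ?thesis by blast
qed

lemma Wset_nonneg: "s \<in> Wset z y \<Longrightarrow> 0 \<le> s"
  unfolding Wset_def mem_Collect_eq
  by (elim exE conjE) (simp only: Bochner_Integration.integral_nonneg zero_le_dist)

lemma W1_nonneg: "0 \<le> W1 (P z) (P y)"
  unfolding W1_eq using Wset_nonempty Wset_nonneg by (intro cInf_greatest) blast+


lemma lip_W1:
  fixes h :: "'a \<Rightarrow> real"
  assumes hm: "h \<in> borel_measurable borel" and hl: "\<And>a b. \<bar>h a - h b\<bar> \<le> c * dist a b" and c: "0 \<le> c"
    and iz: "integrable (P z) h" and iy: "integrable (P y) h"
  shows "\<bar>(\<integral>u. h u \<partial>P z) - (\<integral>u. h u \<partial>P y)\<bar> \<le> c * W1 (P z) (P y)"
proof -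
  have key: "\<bar>(\<integral>u. h u \<partial>P z) - (\<integral>u. h u \<partial>P y)\<bar> \<le> c * s" if s: "s \<in> Wset z y" for s
  proof -
    from s obtain \<xi> where sd: "s = (\<integral>p. dist (fst p) (snd p) \<partial>\<xi>)" and cp: "coupling \<xi> (P z) (P y)"
      and id: "integrable \<xi> (\<lambda>p. dist (fst p) (snd p))"
      unfolding Wset_def mem_Collect_eq by blast
    have i1: "integrable \<xi> (\<lambda>p. h (fst p))" and e1: "(\<integral>p. h (fst p) \<partial>\<xi>) = (\<integral>u. h u \<partial>P z)"
      using coupling_integrable_fst[OF cp hm iz] by auto
    have i2: "integrable \<xi> (\<lambda>p. h (snd p))" and e2: "(\<integral>p. h (snd p) \<partial>\<xi>) = (\<integral>u. h u \<partial>P y)"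
      using coupling_integrable_snd[OF cp hm iy] by auto
    have "(\<integral>u. h u \<partial>P z) - (\<integral>u. h u \<partial>P y) = (\<integral>p. h (fst p) - h (snd p) \<partial>\<xi>)"
      using e1 e2 Bochner_Integration.integral_diff[OF i1 i2] by simp
    also have "\<bar>\<dots>\<bar> \<le> (\<integral>p. \<bar>h (fst p) - h (snd p)\<bar> \<partial>\<xi>)"
      by (rule integral_abs_bound)
    also have "\<dots> \<le> (\<integral>p. c * dist (fst p) (snd p) \<partial>\<xi>)"
      by (rule integral_mono) (use i1 i2 id hl in auto)
    also have "\<dots> = c * s" using sd by simp
    finally show ?thesis .
  qed
  obtain s0 where s0: "s0 \<in> Wset z y" using Wset_nonempty by blast
  show ?thesis
  proof (cases "c = 0")
    case True
    then show ?thesis using key[OF s0] by simp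
  next
    case False
    then have cp: "0 < c" using c by simp
    have "\<bar>(\<integral>u. h u \<partial>P z) - (\<integral>u. h u \<partial>P y)\<bar> / c \<le> Inf (Wset z y)"
      by (rule cInf_greatest[OF Wset_nonempty]) (use key cp in \<open>simp add: divide_le_eq mult.commute\<close>)
    then show ?thesis unfolding W1_eq using cp by (simp add: divide_le_eq mult.commute)
  qed
qed

end



definition lipf :: "real \<Rightarrow> ('a::metric_space \<Rightarrow> real) \<Rightarrow> bool" where
  "lipf c h \<longleftrightarrow> 0 \<le> c \<and> (\<forall>a b. \<bar>h a - h b\<bar> \<le> c * dist a b)"

lemma lipfD: "lipf c h \<Longrightarrow> \<bar>h a - h b\<bar> \<le> c * dist a b"
  unfolding lipf_def by blast

lemma lipf_nonneg: "lipf c h \<Longrightarrow> 0 \<le> c"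
  unfolding lipf_def by blast

lemma lipf_meas:
  fixes h :: "'a::metric_space \<Rightarrow> real"
  assumes "lipf c h" shows "h \<in> borel_measurable borel"
proof -
  have "c-lipschitz_on UNIV h"
    using assms unfolding lipf_def lipschitz_on_def dist_real_def by blast
  then have "continuous_on UNIV h" by (rule lipschitz_on_continuous_on)
  then show ?thesis by (rule borel_measurable_continuous_onI)
qed

lemma lipf_dist: "lipf 1 (\<lambda>y. dist w y)"
  unfolding lipf_def
proof (intro conjI allI)
  fix a b show "\<bar>dist w a - dist w b\<bar> \<le> 1 * dist a b"
    using dist_triangle3[of w a b] dist_triangle3[of w b a] by (simp add: dist_commute abs_le_iff)
qed simp

lemma lipf_int_gen:
  fixes h :: "'a::metric_space \<Rightarrow> real"
  assumes M: "prob_space M" "sets M = sets borel" and i: "integrable M (\<lambda>y. dist w y)" and l: "lipf c h"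
  shows "integrable M h"
proof -
  have hm: "h \<in> borel_measurable M"
    using lipf_meas[OF l] measurable_cong_sets[OF M(2) refl] by blast
  have iB: "integrable M (\<lambda>y. \<bar>h w\<bar> + c * dist w y)"
  proof (rule Bochner_Integration.integrable_add)
    show "integrable M (\<lambda>y. \<bar>h w\<bar>)" using prob_space.finite_measure[OF M(1)] by (rule finite_measure.integrable_const)
    show "integrable M (\<lambda>y. c * dist w y)" using i by (rule integrable_mult_right)
  qed
  have nb: "norm (h y) \<le> norm (\<bar>h w\<bar> + c * dist w y)" for y
  proof -
    have 1: "\<bar>h y - h w\<bar> \<le> c * dist y w" by (rule lipfD[OF l])
    have 2: "dist y w = dist w y" by (rule dist_commute)
    have 3: "0 \<le> c * dist w y" using lipf_nonneg[OF l] by simp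
    have 4: "\<bar>h y - h w\<bar> \<le> c * dist w y" using 1 unfolding 2 .
    from 4 3 have "\<bar>h y\<bar> \<le> \<bar>\<bar>h w\<bar> + c * dist w y\<bar>" by arith
    then show ?thesis unfolding real_norm_def .
  qed
  show ?thesis
    by (rule Bochner_Integration.integrable_bound[OF iB hm AE_I2[OF nb]])
qed

context chain begin

definition Pop :: "('a \<Rightarrow> real) \<Rightarrow> 'a \<Rightarrow> real" where
  "Pop h z = (\<integral>u. h u \<partial>P z)"

definition \<rho> where "\<rho> = max 0 (1 - \<kappa>)"

lemma rho_nonneg: "0 \<le> \<rho>" unfolding \<rho>_def by simp

lemma lipf_int_P: "lipf c h \<Longrightarrow> integrable (P z) h"
  by (rule lipf_int_gen[OF prob_P sets_P P_moment])

lemma lipf_Pop: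
  assumes l: "lipf c h" shows "lipf (c * \<rho>) (Pop h)"
  unfolding lipf_def
proof (intro conjI allI)
  show "0 \<le> c * \<rho>" using lipf_nonneg[OF l] rho_nonneg by simp
  fix a b
  have "\<bar>Pop h a - Pop h b\<bar> \<le> c * W1 (P a) (P b)"
    unfolding Pop_def
    by (rule lip_W1[OF lipf_meas[OF l] lipfD[OF l] lipf_nonneg[OF l] lipf_int_P[OF l] lipf_int_P[OF l]])
  also have "\<dots> \<le> c * ((1 - \<kappa>) * dist a b)"
    by (rule mult_left_mono[OF contraction lipf_nonneg[OF l]])
  also have "\<dots> \<le> c * (\<rho> * dist a b)"
    by (rule mult_left_mono[OF mult_right_mono]) (use lipf_nonneg[OF l] in \<open>auto simp: \<rho>_def\<close>)
  finally show "\<bar>Pop h a - Pop h b\<bar> \<le> c * \<rho> * dist a b" by (simp add: mult.assoc)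
qed

end



lemma lin_decomp:
  fixes A B h :: "'a \<Rightarrow> real"
  assumes \<nu>: "prob_space \<nu>" and iA: "integrable \<nu> A" and iB: "integrable \<nu> B"
    and e: "\<And>y. h y = A y - B y + k"
  shows "integrable \<nu> h" "(\<integral>y. h y \<partial>\<nu>) = (\<integral>y. A y \<partial>\<nu>) - (\<integral>y. B y \<partial>\<nu>) + k"
proof -
  have he: "h = (\<lambda>y. A y - B y + k)" using e by (rule ext)
  have ic: "integrable \<nu> (\<lambda>y. k)" using prob_space.finite_measure[OF \<nu>] by (rule finite_measure.integrable_const)
  have iAB: "integrable \<nu> (\<lambda>y. A y - B y)" using iA iB by (rule Bochner_Integration.integrable_diff)
  show "integrable \<nu> h" unfolding he using iAB ic by (rule Bochner_Integration.integrable_add)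
  have "(\<integral>y. A y - B y + k \<partial>\<nu>) = (\<integral>y. A y - B y \<partial>\<nu>) + (\<integral>y. k \<partial>\<nu>)"
    by (rule Bochner_Integration.integral_add[OF iAB ic])
  also have "(\<integral>y. A y - B y \<partial>\<nu>) = (\<integral>y. A y \<partial>\<nu>) - (\<integral>y. B y \<partial>\<nu>)"
    by (rule Bochner_Integration.integral_diff[OF iA iB])
  also have "(\<integral>y. k \<partial>\<nu>) = k"
    using prob_space.prob_space[OF \<nu>] by simp
  finally show "(\<integral>y. h y \<partial>\<nu>) = (\<integral>y. A y \<partial>\<nu>) - (\<integral>y. B y \<partial>\<nu>) + k" unfolding he .
qed

context chain begin

lemma bind_facts:
  assumes \<mu>: "prob_space \<mu>" "sets \<mu> = sets borel"
  shows "prob_space (\<mu> \<bind> P)" "sets (\<mu> \<bind> P) = sets borel"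
    and "P \<in> measurable \<mu> (subprob_algebra borel)"
proof -
  have "\<mu> \<in> space (prob_algebra borel)" unfolding space_prob_algebra using \<mu> by blast
  then show "prob_space (\<mu> \<bind> P)" by (rule prob_space_bind'[OF _ P_meas])
  show "sets (\<mu> \<bind> P) = sets borel"
    by (rule sets_bind[OF sets_P prob_space.not_empty[OF \<mu>(1)]])
  show "P \<in> measurable \<mu> (subprob_algebra borel)"
    using measurable_prob_algebraD[OF P_meas] measurable_cong_sets[OF \<mu>(2) refl] by blast
qed

lemma bind_nonneg:
  assumes \<mu>: "prob_space \<mu>" "sets \<mu> = sets borel" and l: "lipf c h" and nn: "\<And>y. 0 \<le> h y"
    and ip: "integrable \<mu> (Pop h)"
  shows "integrable (\<mu> \<bind> P) h" "(\<integral>y. h y \<partial>(\<mu> \<bind> P)) = (\<integral>z. Pop h z \<partial>\<mu>)"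
proof -
  note bf = bind_facts[OF \<mu>]
  have hm: "h \<in> borel_measurable borel" by (rule lipf_meas[OF l])
  have hmb: "h \<in> borel_measurable (\<mu> \<bind> P)"
    using hm measurable_cong_sets[OF bf(2) refl] by blast
  have hme: "(\<lambda>y. ennreal (h y)) \<in> borel_measurable borel" using hm by measurable
  have nn1: "(\<integral>\<^sup>+y. ennreal (h y) \<partial>(\<mu> \<bind> P)) = (\<integral>\<^sup>+z. \<integral>\<^sup>+y. ennreal (h y) \<partial>P z \<partial>\<mu>)"
    by (rule nn_integral_bind[OF hme bf(3)])
  have nn2: "(\<integral>\<^sup>+y. ennreal (h y) \<partial>P z) = ennreal (Pop h z)" for z
    unfolding Pop_def by (rule nn_integral_eq_integral[OF lipf_int_P[OF l] AE_I2[OF nn]])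
  have Pnn: "0 \<le> Pop h z" for z unfolding Pop_def by (rule Bochner_Integration.integral_nonneg[OF nn])
  have nn3: "(\<integral>\<^sup>+z. ennreal (Pop h z) \<partial>\<mu>) = ennreal (\<integral>z. Pop h z \<partial>\<mu>)"
    by (rule nn_integral_eq_integral[OF ip AE_I2[OF Pnn]])
  have fin: "(\<integral>\<^sup>+y. ennreal (h y) \<partial>(\<mu> \<bind> P)) = ennreal (\<integral>z. Pop h z \<partial>\<mu>)"
    unfolding nn1 nn2 nn3 ..
  show "integrable (\<mu> \<bind> P) h"
    by (rule integrableI_nn_integral_finite[OF hmb AE_I2[OF nn] fin])
  have "(\<integral>y. h y \<partial>(\<mu> \<bind> P)) = enn2real (\<integral>\<^sup>+y. ennreal (h y) \<partial>(\<mu> \<bind> P))"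
    by (rule integral_eq_nn_integral[OF hmb AE_I2[OF nn]])
  also have "\<dots> = (\<integral>z. Pop h z \<partial>\<mu>)"
    unfolding fin using Bochner_Integration.integral_nonneg[of \<mu> "Pop h", OF Pnn] by simp
  finally show "(\<integral>y. h y \<partial>(\<mu> \<bind> P)) = (\<integral>z. Pop h z \<partial>\<mu>)" .
qed


lemma lipf_shift:
  assumes l: "lipf c h"
  shows "lipf (2 * c) (\<lambda>y. h y - h w + c * dist w y)" "lipf c (\<lambda>y. c * dist w y)"
    "0 \<le> h y - h w + c * dist w y" "0 \<le> c * dist w y"
proof -
  have c: "0 \<le> c" by (rule lipf_nonneg[OF l])
  have dl: "\<bar>c * dist w a - c * dist w b\<bar> \<le> c * dist a b" for a b
  proof -
    have "\<bar>c * dist w a - c * dist w b\<bar> = c * \<bar>dist w a - dist w b\<bar>"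
      using c by (simp add: abs_mult right_diff_distrib[symmetric])
    also have "\<dots> \<le> c * (1 * dist a b)"
      by (rule mult_left_mono[OF lipfD[OF lipf_dist] c])
    finally show ?thesis by simp
  qed
  show "lipf (2 * c) (\<lambda>y. h y - h w + c * dist w y)"
    unfolding lipf_def
  proof (intro conjI allI)
    show "0 \<le> 2 * c" using c by simp
    fix a b
    have 1: "\<bar>h a - h b\<bar> \<le> c * dist a b" by (rule lipfD[OF l])
    from 1 dl[of a b] show "\<bar>h a - h w + c * dist w a - (h b - h w + c * dist w b)\<bar> \<le> 2 * c * dist a b"
      by arith
  qed
  show "lipf c (\<lambda>y. c * dist w y)"
    unfolding lipf_def using c dl by blast
  have 2: "\<bar>h y - h w\<bar> \<le> c * dist y w" by (rule lipfD[OF l])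
  have 3: "dist y w = dist w y" by (rule dist_commute)
  from 2 have "\<bar>h y - h w\<bar> \<le> c * dist w y" unfolding 3 .
  then show "0 \<le> h y - h w + c * dist w y" by arith
  show "0 \<le> c * dist w y" using c by simp
qed

lemma bind_lip:
  assumes \<mu>: "prob_space \<mu>" "sets \<mu> = sets borel" and im: "integrable \<mu> (\<lambda>y. dist w y)"
    and l: "lipf c h"
  shows "integrable (\<mu> \<bind> P) h" "(\<integral>y. h y \<partial>(\<mu> \<bind> P)) = (\<integral>z. Pop h z \<partial>\<mu>)"
proof -
  define A where "A = (\<lambda>y. h y - h w + c * dist w y)"
  define B where "B = (\<lambda>y. c * dist w y)"
  have lA: "lipf (2*c) A" and lB: "lipf c B" and nA: "\<And>y. 0 \<le> A y" and nB: "\<And>y. 0 \<le> B y"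
    unfolding A_def B_def using lipf_shift[OF l] by blast+
  have e: "\<And>y. h y = A y - B y + h w" unfolding A_def B_def by simp
  have iPA: "integrable \<mu> (Pop A)" by (rule lipf_int_gen[OF \<mu> im lipf_Pop[OF lA]])
  have iPB: "integrable \<mu> (Pop B)" by (rule lipf_int_gen[OF \<mu> im lipf_Pop[OF lB]])
  note bA = bind_nonneg[OF \<mu> lA nA iPA] and bB = bind_nonneg[OF \<mu> lB nB iPB]
  note bf = bind_facts[OF \<mu>]
  show "integrable (\<mu> \<bind> P) h" by (rule lin_decomp(1)[OF bf(1) bA(1) bB(1) e])
  have "(\<integral>y. h y \<partial>(\<mu> \<bind> P)) = (\<integral>y. A y \<partial>(\<mu> \<bind> P)) - (\<integral>y. B y \<partial>(\<mu> \<bind> P)) + h w"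
    by (rule lin_decomp(2)[OF bf(1) bA(1) bB(1) e])
  also have "\<dots> = (\<integral>z. Pop A z \<partial>\<mu>) - (\<integral>z. Pop B z \<partial>\<mu>) + h w"
    unfolding bA(2) bB(2) ..
  also have "\<dots> = (\<integral>z. Pop h z \<partial>\<mu>)"
  proof -
    have ePop: "\<And>z. Pop h z = Pop A z - Pop B z + h w"
      unfolding Pop_def by (rule lin_decomp(2)[OF prob_P lipf_int_P[OF lA] lipf_int_P[OF lB] e])
    show ?thesis by (rule lin_decomp(2)[OF \<mu>(1) iPA iPB ePop, symmetric])
  qed
  finally show "(\<integral>y. h y \<partial>(\<mu> \<bind> P)) = (\<integral>z. Pop h z \<partial>\<mu>)" .
qed

lemma bind_moment:
  assumes \<mu>: "prob_space \<mu>" "sets \<mu> = sets borel" and im: "integrable \<mu> (\<lambda>y. dist w y)"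
  shows "integrable (\<mu> \<bind> P) (\<lambda>y. dist v y)"
  by (rule bind_lip(1)[OF \<mu> im lipf_dist])

end



context chain begin

lemma kpow_facts:
  "prob_space (kpow P n x) \<and> sets (kpow P n x) = sets borel \<and> integrable (kpow P n x) (\<lambda>y. dist x y)"
proof (induction n)
  case 0
  have p: "prob_space (return borel x)" by (rule prob_space_return) simp
  have s: "sets (return borel x) = sets borel" by (rule sets_return)
  have ae: "AE y in return borel x. norm (dist x y) \<le> 0"
  proof -
    have "Measurable.pred borel (\<lambda>y. norm (dist x y) \<le> 0)" by measurable
    then show ?thesis using AE_return[of x borel "\<lambda>y. norm (dist x y) \<le> 0"] by simp
  qed
  have m: "(\<lambda>y. dist x y) \<in> borel_measurable (return borel x)"
    using lipf_meas[OF lipf_dist[of x]] measurable_cong_sets[OF s refl] by blast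
  have "integrable (return borel x) (\<lambda>y. dist x y)"
    by (rule finite_measure.integrable_const_bound[OF prob_space.finite_measure[OF p] ae m])
  then show ?case using p s by simp
next
  case (Suc n)
  then have p: "prob_space (kpow P n x)" and s: "sets (kpow P n x) = sets borel"
    and i: "integrable (kpow P n x) (\<lambda>y. dist x y)" by blast+
  show ?case
    using bind_facts(1,2)[OF p s] bind_moment[OF p s i, of x] by simp
qed

lemma lipf_funpow: "lipf c g \<Longrightarrow> lipf (c * \<rho> ^ n) ((Pop ^^ n) g)"
proof (induction n)
  case 0 then show ?case by simp
next
  case (Suc n)
  have "lipf (c * \<rho> ^ n * \<rho>) (Pop ((Pop ^^ n) g))" by (rule lipf_Pop[OF Suc.IH[OF Suc.prems]])
  moreover have "c * \<rho> ^ n * \<rho> = c * \<rho> ^ Suc n" by (simp add: power_Suc2 mult.assoc)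
  ultimately show ?case by simp
qed

lemma kpow_Pop: "lipf c g \<Longrightarrow> (\<integral>y. g y \<partial>kpow P n x) = (Pop ^^ n) g x"
proof (induction n arbitrary: c g)
  case 0
  then show ?case using integral_return[of x borel g] lipf_meas[OF 0] by simp
next
  case (Suc n)
  have p: "prob_space (kpow P n x)" and s: "sets (kpow P n x) = sets borel"
    and i: "integrable (kpow P n x) (\<lambda>y. dist x y)" using kpow_facts[of n x] by blast+
  have "(\<integral>y. g y \<partial>kpow P (Suc n) x) = (\<integral>y. g y \<partial>(kpow P n x \<bind> P))" by simp
  also have "\<dots> = (\<integral>z. Pop g z \<partial>kpow P n x)" by (rule bind_lip(2)[OF p s i Suc.prems])
  also have "\<dots> = (Pop ^^ n) (Pop g) x" by (rule Suc.IH[OF lipf_Pop[OF Suc.prems]])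
  also have "\<dots> = (Pop ^^ Suc n) g x" by (simp only: funpow_Suc_right comp_def)
  finally show ?case .
qed

lemma inv_Pop:
  assumes \<pi>: "prob_space \<pi>" "sets \<pi> = sets borel" and inv: "\<pi> \<bind> P = \<pi>"
    and im: "integrable \<pi> (\<lambda>y. dist w y)"
  shows "lipf c g \<Longrightarrow> (\<integral>y. g y \<partial>\<pi>) = (\<integral>y. (Pop ^^ n) g y \<partial>\<pi>)"
proof (induction n arbitrary: c g)
  case 0 then show ?case by simp
next
  case (Suc n)
  have "(\<integral>y. g y \<partial>\<pi>) = (\<integral>y. g y \<partial>(\<pi> \<bind> P))" unfolding inv ..
  also have "\<dots> = (\<integral>z. Pop g z \<partial>\<pi>)" by (rule bind_lip(2)[OF \<pi> im Suc.prems])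
  also have "\<dots> = (\<integral>y. (Pop ^^ n) (Pop g) y \<partial>\<pi>)" by (rule Suc.IH[OF lipf_Pop[OF Suc.prems]])
  also have "\<dots> = (\<integral>y. (Pop ^^ Suc n) g y \<partial>\<pi>)" by (simp only: funpow_Suc_right comp_def)
  finally show ?case .
qed

lemma Pop_bdd:
  assumes l: "lipf c g" and b: "\<And>y. 0 \<le> g y \<and> g y \<le> R"
  shows "0 \<le> Pop g z \<and> Pop g z \<le> R"
proof
  show "0 \<le> Pop g z" unfolding Pop_def using b by (simp add: Bochner_Integration.integral_nonneg)
  show "Pop g z \<le> R" unfolding Pop_def
    by (rule prob_space.integral_le_const[OF prob_P lipf_int_P[OF l]]) (use b in blast)
qed

lemma funpow_bdd:
  assumes l: "lipf c g" and b: "\<And>y. 0 \<le> g y \<and> g y \<le> R"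
  shows "0 \<le> (Pop ^^ n) g z \<and> (Pop ^^ n) g z \<le> R"
proof (induction n arbitrary: z)
  case 0 then show ?case using b by simp
next
  case (Suc n)
  show ?case unfolding funpow.simps comp_def
    by (rule Pop_bdd[OF lipf_funpow[OF l] Suc.IH])
qed

lemma inv_Pop_bdd:
  assumes \<pi>: "prob_space \<pi>" "sets \<pi> = sets borel" and inv: "\<pi> \<bind> P = \<pi>"
  shows "lipf c g \<Longrightarrow> (\<And>y. 0 \<le> g y \<and> g y \<le> R) \<Longrightarrow> (\<integral>y. g y \<partial>\<pi>) = (\<integral>y. (Pop ^^ n) g y \<partial>\<pi>)"
proof (induction n arbitrary: c g)
  case 0 then show ?case by simp
next
  case (Suc n)
  have lP: "lipf (c * \<rho>) (Pop g)" by (rule lipf_Pop[OF Suc.prems(1)])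
  have bP: "\<And>y. 0 \<le> Pop g y \<and> Pop g y \<le> R" by (rule Pop_bdd[OF Suc.prems])
  have mP: "Pop g \<in> borel_measurable \<pi>"
    using lipf_meas[OF lP] measurable_cong_sets[OF \<pi>(2) refl] by blast
  have iP: "integrable \<pi> (Pop g)"
    by (rule finite_measure.integrable_const_bound[OF prob_space.finite_measure[OF \<pi>(1)] AE_I2 mP, of R])
       (use bP in auto)
  have nn: "\<And>y. 0 \<le> g y" using Suc.prems(2) by blast
  have "(\<integral>y. g y \<partial>\<pi>) = (\<integral>y. g y \<partial>(\<pi> \<bind> P))" unfolding inv ..
  also have "\<dots> = (\<integral>z. Pop g z \<partial>\<pi>)" by (rule bind_nonneg(2)[OF \<pi> Suc.prems(1) nn iP])
  also have "\<dots> = (\<integral>y. (Pop ^^ n) (Pop g) y \<partial>\<pi>)" by (rule Suc.IH[OF lP bP])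
  also have "\<dots> = (\<integral>y. (Pop ^^ Suc n) g y \<partial>\<pi>)" by (simp only: funpow_Suc_right comp_def)
  finally show ?case .
qed

end



lemma lipf_min: "lipf c h \<Longrightarrow> lipf c (\<lambda>y. min (h y) R)"
  unfolding lipf_def
proof (intro conjI allI)
  assume l: "0 \<le> c \<and> (\<forall>a b. \<bar>h a - h b\<bar> \<le> c * dist a b)"
  then show "0 \<le> c" by blast
  fix a b
  have "\<bar>min (h a) R - min (h b) R\<bar> \<le> \<bar>h a - h b\<bar>" by (simp add: min_def; arith)
  also have "\<dots> \<le> c * dist a b" using l by blast
  finally show "\<bar>min (h a) R - min (h b) R\<bar> \<le> c * dist a b" .
qed

context chain begin

definition ecc1 where "ecc1 x n = (\<integral>y. dist x y \<partial>kpow P n x)"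

lemma rho_lt1: "0 < \<kappa> \<Longrightarrow> \<rho> < 1" unfolding \<rho>_def by simp

lemma ecc1_step:
  "ecc1 x (Suc n) \<le> Pop (\<lambda>y. dist x y) x + \<rho> * ecc1 x n"
proof -
  have p: "prob_space (kpow P n x)" and s: "sets (kpow P n x) = sets borel"
    and i: "integrable (kpow P n x) (\<lambda>y. dist x y)" using kpow_facts[of n x] by blast+
  let ?g = "Pop (\<lambda>y. dist x y)"
  have lg: "lipf (1 * \<rho>) ?g" by (rule lipf_Pop[OF lipf_dist])
  have "ecc1 x (Suc n) = (\<integral>z. ?g z \<partial>kpow P n x)"
    unfolding ecc1_def kpow.simps by (rule bind_lip(2)[OF p s i lipf_dist])
  also have "\<dots> \<le> (\<integral>z. ?g x + \<rho> * dist x z \<partial>kpow P n x)"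
  proof (rule integral_mono)
    show "integrable (kpow P n x) ?g" by (rule lipf_int_gen[OF p s i lg])
    show "integrable (kpow P n x) (\<lambda>z. ?g x + \<rho> * dist x z)"
      by (rule Bochner_Integration.integrable_add[OF finite_measure.integrable_const[OF prob_space.finite_measure[OF p]] integrable_mult_right[OF i]])
    fix z
    have "\<bar>?g z - ?g x\<bar> \<le> 1 * \<rho> * dist z x" by (rule lipfD[OF lg])
    then show "?g z \<le> ?g x + \<rho> * dist x z" by (simp add: dist_commute abs_le_iff)
  qed
  also have "\<dots> = ?g x + \<rho> * ecc1 x n"
    unfolding ecc1_def
    by (subst Bochner_Integration.integral_add[OF finite_measure.integrable_const[OF prob_space.finite_measure[OF p]] integrable_mult_right[OF i]])
       (simp add: prob_space.prob_space[OF p])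
  finally show ?thesis .
qed

lemma ecc1_bound:
  assumes k: "0 < \<kappa>"
  shows "ecc1 x n \<le> Pop (\<lambda>y. dist x y) x / (1 - \<rho>)"
proof (induction n)
  let ?m = "Pop (\<lambda>y. dist x y) x"
  have m0: "0 \<le> ?m" unfolding Pop_def by (simp add: Bochner_Integration.integral_nonneg)
  have r: "\<rho> < 1" "0 \<le> \<rho>" using rho_lt1[OF k] rho_nonneg by auto
  case 0
  have "ecc1 x 0 = 0" unfolding ecc1_def kpow.simps
    using integral_return[of x borel "\<lambda>y. dist x y"] lipf_meas[OF lipf_dist[of x]] by simp
  then show ?case using m0 r by simp
next
  let ?m = "Pop (\<lambda>y. dist x y) x"
  have r: "\<rho> < 1" "0 \<le> \<rho>" using rho_lt1[OF k] rho_nonneg by auto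
  case (Suc n)
  have "ecc1 x (Suc n) \<le> ?m + \<rho> * ecc1 x n" by (rule ecc1_step)
  also have "\<dots> \<le> ?m + \<rho> * (?m / (1 - \<rho>))"
    using mult_left_mono[OF Suc.IH r(2)] by simp
  also have "\<dots> = ?m / (1 - \<rho>)" using r by (simp add: field_simps)
  finally show ?case .
qed

end



lemma bdd_int:
  fixes f :: "'a \<Rightarrow> real"
  assumes M: "prob_space M" and m: "f \<in> borel_measurable M" and b: "\<And>y. \<bar>f y\<bar> \<le> B"
  shows "integrable M f"
  by (rule finite_measure.integrable_const_bound[OF prob_space.finite_measure[OF M] AE_I2 m, of B])
     (use b in simp)

context chain begin

lemma trunc_bound:
  fixes x :: 'a
  assumes k: "0 < \<kappa>" and \<pi>: "prob_space \<pi>" "sets \<pi> = sets borel" and inv: "\<pi> \<bind> P = \<pi>"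
    and R: "0 \<le> R"
  defines "K \<equiv> Pop (\<lambda>y. dist x y) x / (1 - \<rho>)"
  shows "(\<integral>y. min (dist x y) R \<partial>\<pi>) \<le> K + 1"
proof -
  let ?h = "\<lambda>y. min (dist x y) R"
  have lh: "lipf 1 ?h" by (rule lipf_min[OF lipf_dist])
  have bh: "\<And>y. 0 \<le> ?h y \<and> ?h y \<le> R" using R by simp
  have r: "\<rho> < 1" "0 \<le> \<rho>" using rho_lt1[OF k] rho_nonneg by auto
  have K0: "0 \<le> K" unfolding K_def Pop_def using r
    by (simp add: Bochner_Integration.integral_nonneg)
  define J where "J n = (\<integral>z. min (\<rho> ^ n * dist x z) R \<partial>\<pi>)" for n
  have mJ: "(\<lambda>z. min (\<rho> ^ n * dist x z) R) \<in> borel_measurable \<pi>" for n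
  proof -
    have "(\<lambda>z. min (\<rho> ^ n * dist x z) R) \<in> borel_measurable borel" by measurable
    then show ?thesis using measurable_cong_sets[OF \<pi>(2) refl] by blast
  qed
  have iJ: "integrable \<pi> (\<lambda>z. min (\<rho> ^ n * dist x z) R)" for n
    by (rule bdd_int[OF \<pi>(1) mJ, of n R]) (use R r in \<open>auto simp: abs_le_iff\<close>)
  have step: "(\<integral>y. ?h y \<partial>\<pi>) \<le> K + J n" for n
  proof -
    let ?g = "(Pop ^^ n) ?h"
    have lg: "lipf (1 * \<rho> ^ n) ?g" by (rule lipf_funpow[OF lh])
    have bg: "\<And>z. 0 \<le> ?g z \<and> ?g z \<le> R" by (rule funpow_bdd[OF lh bh])
    have p: "prob_space (kpow P n x)" and s: "sets (kpow P n x) = sets borel"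
      and i: "integrable (kpow P n x) (\<lambda>y. dist x y)" using kpow_facts[of n x] by blast+
    have "?g x = (\<integral>y. ?h y \<partial>kpow P n x)" by (rule kpow_Pop[OF lh, symmetric])
    also have "\<dots> \<le> (\<integral>y. dist x y \<partial>kpow P n x)"
      by (rule integral_mono[OF lipf_int_gen[OF p s i lh] i]) simp
    also have "\<dots> \<le> K" unfolding K_def using ecc1_bound[OF k, of x n] unfolding ecc1_def .
    finally have gx: "?g x \<le> K" .
    have gz: "?g z \<le> K + min (\<rho> ^ n * dist x z) R" for z
    proof -
      have "\<bar>?g z - ?g x\<bar> \<le> 1 * \<rho> ^ n * dist z x" by (rule lipfD[OF lg])
      then have "?g z \<le> ?g x + \<rho> ^ n * dist x z" by (simp add: dist_commute abs_le_iff)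
      then show ?thesis using gx bg[of z] K0 by (simp add: min_def)
    qed
    have mg: "?g \<in> borel_measurable \<pi>"
      using lipf_meas[OF lg] measurable_cong_sets[OF \<pi>(2) refl] by blast
    have ig: "integrable \<pi> ?g" by (rule bdd_int[OF \<pi>(1) mg, of R]) (use bg in \<open>auto simp: abs_le_iff\<close>)
    have iK: "integrable \<pi> (\<lambda>z. K + min (\<rho> ^ n * dist x z) R)"
      by (rule Bochner_Integration.integrable_add[OF finite_measure.integrable_const[OF prob_space.finite_measure[OF \<pi>(1)]] iJ])
    have "(\<integral>y. ?h y \<partial>\<pi>) = (\<integral>y. ?g y \<partial>\<pi>)" by (rule inv_Pop_bdd[OF \<pi> inv lh bh])
    also have "\<dots> \<le> (\<integral>z. K + min (\<rho> ^ n * dist x z) R \<partial>\<pi>)"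
      by (rule integral_mono[OF ig iK gz])
    also have "\<dots> = K + J n" unfolding J_def
      by (subst Bochner_Integration.integral_add[OF finite_measure.integrable_const[OF prob_space.finite_measure[OF \<pi>(1)]] iJ])
         (simp add: prob_space.prob_space[OF \<pi>(1)])
    finally show ?thesis .
  qed
  have lim: "J \<longlonglongrightarrow> (\<integral>z. 0 \<partial>\<pi>)" unfolding J_def
  proof (rule integral_dominated_convergence[where w="\<lambda>_. R"])
    show "(\<lambda>z. 0::real) \<in> borel_measurable \<pi>" by simp
    show "\<And>n. (\<lambda>z. min (\<rho> ^ n * dist x z) R) \<in> borel_measurable \<pi>" by (rule mJ)
    show "integrable \<pi> (\<lambda>_. R)" by (rule finite_measure.integrable_const[OF prob_space.finite_measure[OF \<pi>(1)]])
    show "AE z in \<pi>. (\<lambda>n. min (\<rho> ^ n * dist x z) R) \<longlonglongrightarrow> 0"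
    proof (rule AE_I2)
      fix z
      have "(\<lambda>n. \<rho> ^ n) \<longlonglongrightarrow> 0" by (rule LIMSEQ_power_zero) (use r in simp)
      then have "(\<lambda>n. \<rho> ^ n * dist x z) \<longlonglongrightarrow> 0 * dist x z" by (rule tendsto_mult_right)
      then have "(\<lambda>n. min (\<rho> ^ n * dist x z) R) \<longlonglongrightarrow> min (0 * dist x z) R"
        by (rule tendsto_min[OF _ tendsto_const])
      then show "(\<lambda>n. min (\<rho> ^ n * dist x z) R) \<longlonglongrightarrow> 0" using R by simp
    qed
    show "\<And>n. AE z in \<pi>. norm (min (\<rho> ^ n * dist x z) R) \<le> R"
      by (rule AE_I2) (use R r in \<open>auto simp: abs_le_iff\<close>)
  qed
  then have "J \<longlonglongrightarrow> 0" by simp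
  then have "eventually (\<lambda>n. J n < 1) sequentially" by (rule order_tendstoD(2)) simp
  then obtain n where "J n < 1" by (metis eventually_sequentially order_refl)
  then show ?thesis using step[of n] by simp
qed

lemma pi_moment:
  assumes k: "0 < \<kappa>" and \<pi>: "prob_space \<pi>" "sets \<pi> = sets borel" and inv: "\<pi> \<bind> P = \<pi>"
  shows "integrable \<pi> (\<lambda>y. dist x y)"
proof -
  define K where "K = Pop (\<lambda>y. dist x y) x / (1 - \<rho>)"
  define f where "f i = (\<lambda>y. min (dist x y) (real i))" for i :: nat
  have md: "(\<lambda>y. dist x y) \<in> borel_measurable \<pi>"
    using lipf_meas[OF lipf_dist[of x]] measurable_cong_sets[OF \<pi>(2) refl] by blast
  have mf: "f i \<in> borel_measurable \<pi>" for i
  proof -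
    have "f i \<in> borel_measurable borel" unfolding f_def by measurable
    then show ?thesis using measurable_cong_sets[OF \<pi>(2) refl] by blast
  qed
  have fi: "integrable \<pi> (f i)" for i
    by (rule bdd_int[OF \<pi>(1) mf, of i "real i"]) (simp add: f_def)
  have mono: "AE y in \<pi>. mono (\<lambda>n. f n y)"
    by (rule AE_I2) (auto simp: f_def mono_def intro: min.mono)
  have lim: "AE y in \<pi>. (\<lambda>i. f i y) \<longlonglongrightarrow> dist x y"
  proof (rule AE_I2)
    fix y
    obtain N :: nat where N: "dist x y \<le> real N" using real_arch_simple by blast
    have "eventually (\<lambda>i. f i y = dist x y) sequentially"
      by (rule eventually_sequentiallyI[of N]) (use N in \<open>simp add: f_def\<close>)
    then show "(\<lambda>i. f i y) \<longlonglongrightarrow> dist x y" by (rule tendsto_eventually)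
  qed
  have inc: "incseq (\<lambda>i. integral\<^sup>L \<pi> (f i))"
    by (rule incseq_SucI, rule integral_mono[OF fi fi]) (simp add: f_def)
  have bnd: "\<forall>i. integral\<^sup>L \<pi> (f i) \<le> K + 1"
    unfolding f_def K_def using trunc_bound[OF k \<pi> inv] by simp
  obtain L where L: "(\<lambda>i. integral\<^sup>L \<pi> (f i)) \<longlonglongrightarrow> L"
    using incseq_convergent[OF inc bnd] by blast
  show ?thesis by (rule integrable_monotone_convergence[OF fi mono lim L md])
qed

end



lemma geom_sum:
  fixes \<rho> \<kappa> :: real
  assumes "\<rho> = 1 - \<kappa>"
  shows "\<kappa> * (\<Sum>k = T0 + 1..T0 + T. \<rho> ^ k) = \<rho> ^ (T0 + 1) - \<rho> ^ (T0 + T + 1)"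
proof (induction T)
  case 0 then show ?case by simp
next
  case (Suc T)
  have "(\<Sum>k = T0 + 1..T0 + Suc T. \<rho> ^ k) = (\<Sum>k = T0 + 1..T0 + T. \<rho> ^ k) + \<rho> ^ (T0 + Suc T)"
    by (simp add: sum.cl_ivl_Suc)
  then have "\<kappa> * (\<Sum>k = T0 + 1..T0 + Suc T. \<rho> ^ k) = \<rho> ^ (T0 + 1) - \<rho> ^ (T0 + T + 1) + \<kappa> * \<rho> ^ (T0 + Suc T)"
    using Suc.IH by (simp add: distrib_left)
  also have "\<dots> = \<rho> ^ (T0 + 1) - \<rho> ^ (T0 + Suc T + 1)"
  proof -
    have h1: "\<rho> ^ (T0 + T + 1) = \<rho> ^ (T0 + Suc T)" by simp
    have h2: "\<rho> ^ (T0 + Suc T + 1) = \<rho> * \<rho> ^ (T0 + Suc T)" by simp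
    have h3: "\<kappa> = 1 - \<rho>" using assms by simp
    show ?thesis unfolding h1 h2 h3 by (simp add: algebra_simps)
  qed
  finally show ?case .
qed

context chain begin

lemma single_bound:
  assumes k: "0 < \<kappa>" and \<pi>: "prob_space \<pi>" "sets \<pi> = sets borel" and inv: "\<pi> \<bind> P = \<pi>"
    and l: "lipf L f"
  shows "\<bar>(\<integral>y. f y \<partial>kpow P n x) - (\<integral>y. f y \<partial>\<pi>)\<bar> \<le> L * \<rho> ^ n * eccentricity \<pi> x"
proof -
  have im: "integrable \<pi> (\<lambda>y. dist x y)" by (rule pi_moment[OF k \<pi> inv])
  let ?g = "(Pop ^^ n) f"
  have lg: "lipf (L * \<rho> ^ n) ?g" by (rule lipf_funpow[OF l])
  have ig: "integrable \<pi> ?g" by (rule lipf_int_gen[OF \<pi> im lg])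
  have ic: "integrable \<pi> (\<lambda>y. ?g x)" by (rule finite_measure.integrable_const[OF prob_space.finite_measure[OF \<pi>(1)]])
  have e1: "(\<integral>y. f y \<partial>kpow P n x) = ?g x" by (rule kpow_Pop[OF l])
  have e2: "(\<integral>y. f y \<partial>\<pi>) = (\<integral>y. ?g y \<partial>\<pi>)" by (rule inv_Pop[OF \<pi> inv im l])
  have "?g x - (\<integral>y. ?g y \<partial>\<pi>) = (\<integral>y. ?g x - ?g y \<partial>\<pi>)"
    by (subst Bochner_Integration.integral_diff[OF ic ig]) (simp add: prob_space.prob_space[OF \<pi>(1)])
  also have "\<bar>\<dots>\<bar> \<le> (\<integral>y. \<bar>?g x - ?g y\<bar> \<partial>\<pi>)" by (rule integral_abs_bound)
  also have "\<dots> \<le> (\<integral>y. L * \<rho> ^ n * dist x y \<partial>\<pi>)"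
    by (rule integral_mono) (use ic ig im lipfD[OF lg] in auto)
  also have "\<dots> = L * \<rho> ^ n * eccentricity \<pi> x" unfolding eccentricity_def by simp
  finally show ?thesis unfolding e1 e2 .
qed

end

theorem proposition1:
  fixes P :: "'a::polish_space \<Rightarrow> 'a measure"
    and \<pi> :: "'a measure"
    and \<kappa> :: real
    and T T\<^sub>0 :: nat
    and f :: "'a \<Rightarrow> real"
    and x :: 'a
  assumes P_meas: "P \<in> borel \<rightarrow>\<^sub>M prob_algebra borel"
    and P_moment: "\<And>z. integrable (P z) (\<lambda>y. dist z y)"
    and kappa_pos: "\<kappa> > 0"
    and contraction: "\<And>z y. W1 (P z) (P y) \<le> (1 - \<kappa>) * dist z y"
    and pi_prob: "prob_space \<pi>" and pi_sets: "sets \<pi> = sets borel"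
    and pi_inv: "\<pi> \<bind> P = \<pi>"
    and T_ge: "T \<ge> 1"
    and f_lip: "\<exists>C. C-lipschitz_on UNIV f"
  shows "\<bar>(1 / real T) * (\<Sum>k = T\<^sub>0 + 1..T\<^sub>0 + T. \<integral>y. f y \<partial>(kpow P k x))
            - (\<integral>y. f y \<partial>\<pi>)\<bar>
         \<le> (1 - \<kappa>) ^ (T\<^sub>0 + 1) / (\<kappa> * real T) * eccentricity \<pi> x * lip_norm f"
proof -
  interpret chain P \<kappa> by unfold_locales (fact P_meas P_moment contraction)+
  obtain C where C: "C-lipschitz_on UNIV f" using f_lip by blast
  let ?S = "{\<bar>f a - f b\<bar> / dist a b | a b. a \<noteq> b}"
  have bdd: "bdd_above ?S"
  proof (rule bdd_aboveI[of _ C])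
    fix s assume "s \<in> ?S"
    then obtain a b where s: "s = \<bar>f a - f b\<bar> / dist a b" and ab: "a \<noteq> b" by blast
    have "dist (f a) (f b) \<le> C * dist a b" using C unfolding lipschitz_on_def by blast
    then show "s \<le> C" unfolding s dist_real_def using ab by (simp add: divide_le_eq)
  qed
  have lipn: "\<bar>f a - f b\<bar> \<le> lip_norm f * dist a b" if "a \<noteq> b" for a b
  proof -
    have "\<bar>f a - f b\<bar> / dist a b \<in> ?S" using that by blast
    then have "\<bar>f a - f b\<bar> / dist a b \<le> lip_norm f" unfolding lip_norm_def by (rule cSup_upper[OF _ bdd])
    then show ?thesis using that by (simp add: divide_le_eq mult.commute)
  qed
  define L where "L = max 0 (lip_norm f)"
  have lf: "lipf L f" unfolding lipf_def
  proof (intro conjI allI)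
    show "0 \<le> L" unfolding L_def by simp
    fix a b show "\<bar>f a - f b\<bar> \<le> L * dist a b"
    proof (cases "a = b")
      case True then show ?thesis unfolding L_def by simp
    next
      case False
      have "lip_norm f * dist a b \<le> L * dist a b" unfolding L_def by (rule mult_right_mono) simp_all
      then show ?thesis using lipn[OF False] by linarith
    qed
  qed
  let ?E = "eccentricity \<pi> x"
  let ?I = "\<integral>y. f y \<partial>\<pi>"
  let ?Q = "\<lambda>k. \<integral>y. f y \<partial>(kpow P k x)"
  let ?K = "{T\<^sub>0 + 1..T\<^sub>0 + T}"
  have cardK: "card ?K = T" by simp
  have T0: "real T > 0" using T_ge by simp
  have "(1 / real T) * (\<Sum>k\<in>?K. ?Q k) - ?I = (1 / real T) * (\<Sum>k\<in>?K. ?Q k - ?I)"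
    using T0 by (simp add: sum_subtractf cardK field_simps)
  also have "\<bar>\<dots>\<bar> = (1 / real T) * \<bar>\<Sum>k\<in>?K. ?Q k - ?I\<bar>" using T0 by (simp add: abs_mult)
  also have "\<dots> \<le> (1 / real T) * (\<Sum>k\<in>?K. L * \<rho> ^ k * ?E)"
  proof (rule mult_left_mono)
    have "\<bar>\<Sum>k\<in>?K. ?Q k - ?I\<bar> \<le> (\<Sum>k\<in>?K. \<bar>?Q k - ?I\<bar>)" by (rule sum_abs)
    also have "\<dots> \<le> (\<Sum>k\<in>?K. L * \<rho> ^ k * ?E)"
      by (rule sum_mono, rule single_bound[OF kappa_pos pi_prob pi_sets pi_inv lf])
    finally show "\<bar>\<Sum>k\<in>?K. ?Q k - ?I\<bar> \<le> (\<Sum>k\<in>?K. L * \<rho> ^ k * ?E)" .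
  qed (use T0 in simp)
  also have "\<dots> \<le> (1 - \<kappa>) ^ (T\<^sub>0 + 1) / (\<kappa> * real T) * ?E * lip_norm f"
  proof (cases "?E = 0")
    case True then show ?thesis by simp
  next
    case False
    have E0: "0 \<le> ?E" unfolding eccentricity_def by (simp add: Bochner_Integration.integral_nonneg)
    have "\<exists>y. dist x y \<noteq> 0"
    proof (rule ccontr)
      assume "\<not> (\<exists>y. dist x y \<noteq> 0)"
      then have "\<And>y. dist x y = 0" by blast
      then have "(\<lambda>y. dist x y) = (\<lambda>y. 0::real)" by (rule ext)
      then have "?E = 0" unfolding eccentricity_def by (simp only:) simp
      then show False using False by simp
    qed
    then obtain y where y: "dist x y \<noteq> 0" by blast
    have dpos: "0 < dist x y" using y by simp
    have xy: "x \<noteq> y" using y by auto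
    have "0 \<le> \<bar>f x - f y\<bar> / dist x y" by simp
    also have "\<dots> \<le> lip_norm f" unfolding lip_norm_def by (rule cSup_upper[OF _ bdd]) (use xy in blast)
    finally have ln0: "0 \<le> lip_norm f" .
    then have LL: "L = lip_norm f" unfolding L_def by simp
    have "0 \<le> W1 (P x) (P y)" by (rule W1_nonneg)
    then have "0 \<le> (1 - \<kappa>) * dist x y" using contraction[of x y] by linarith
    then have k1: "\<kappa> \<le> 1" using dpos by (simp add: zero_le_mult_iff)
    then have rr: "\<rho> = 1 - \<kappa>" unfolding \<rho>_def by simp
    have gs: "\<kappa> * (\<Sum>k\<in>?K. \<rho> ^ k) = \<rho> ^ (T\<^sub>0 + 1) - \<rho> ^ (T\<^sub>0 + T + 1)" by (rule geom_sum[OF rr])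
    have "0 \<le> \<rho> ^ (T\<^sub>0 + T + 1)" using rho_nonneg by simp
    then have "\<kappa> * (\<Sum>k\<in>?K. \<rho> ^ k) \<le> \<rho> ^ (T\<^sub>0 + 1)" using gs by linarith
    then have sb: "(\<Sum>k\<in>?K. \<rho> ^ k) \<le> \<rho> ^ (T\<^sub>0 + 1) / \<kappa>" using kappa_pos by (simp add: le_divide_eq mult.commute)
    have LE: "0 \<le> L * ?E" using E0 lipf_nonneg[OF lf] by simp
    have "(\<Sum>k\<in>?K. L * \<rho> ^ k * ?E) = (L * ?E) * (\<Sum>k\<in>?K. \<rho> ^ k)"
      by (simp add: sum_distrib_left mult.commute mult.left_commute)
    also have "\<dots> \<le> (L * ?E) * (\<rho> ^ (T\<^sub>0 + 1) / \<kappa>)" by (rule mult_left_mono[OF sb LE])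
    finally have "(1 / real T) * (\<Sum>k\<in>?K. L * \<rho> ^ k * ?E) \<le> (1 / real T) * ((L * ?E) * (\<rho> ^ (T\<^sub>0 + 1) / \<kappa>))"
      by (rule mult_left_mono) (use T0 in simp)
    also have "\<dots> = (1 - \<kappa>) ^ (T\<^sub>0 + 1) / (\<kappa> * real T) * ?E * lip_norm f"
      unfolding LL rr by (simp add: field_simps)
    finally show ?thesis .
  qed
  finally show ?thesis .
qed


end
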